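(* Let $M,N$ be $\mathtt{dBang}$ terms with $M\to_S N$ (one surface step). Then for every resource term $m\sqsubset M$, either $m$ reduces to $\emptyset$ in one surface resource step, or there is a resource term $n\sqsubset N$ such that $m$ reduces to $n$ in one surface resource step.
   Context: \textbf{dBang.} Terms: $M,N ::= x \mid \lambda x.M \mid MN \mid M[N/x] \mid\ !M \mid \mathrm{der}\,M$ ($M[N/x]$ explicit substitution binding $x$); $M\{N/x\}$ capture-avoiding substitution. List contexts $L ::= \square\mid L[N/x]$. Root rules: $L\langle\lambda x.M\rangle N \mapsto L\langle M[N/x]\rangle$; $M[L\langle !N\rangle/x]\mapsto L\langle M\{N/x\}\rangle$; $\mathrm{der}(L\langle !N\rangle)\mapsto L\langle N\rangle$. Surface contexts: $S ::= \square\mid\lambda x.S\mid SM\mid MS\mid S[M/x]\mid M[S/x]\mid\mathrm{der}\,S$ (hole not under $!$); $\to_S$ is the closure of the root rules under surface contexts. \textbf{Resources.} Resource terms: $m,n ::= x\mid\lambda x.m\mid mn\mid m[n/x]\mid\mathrm{der}\,m\mid[m_1,\dots,m_k]$ ($k\ge0$ multisets). Resource list contexts $l::=\square\mid l[n/x]$. Root resource rules (target a resource term or the zero symbol $\emptyset$): $\mathrm{der}(l\langle[m]\rangle)\to l\langle m\rangle$; $\mathrm{der}(l\langle[m_1,\dots,m_k]\rangle)\to\emptyset$ if $k\ne1$; $l\langle\lambda x.m\rangle n\to l\langle m[n/x]\rangle$; $m[l\langle[n_1,\dots,n_k]\rangle/x]\to l\langle m\{n_{\sigma(1)}/x_1,\dots,n_{\sigma(k)}/x_k\}\rangle$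 for every permutation $\sigma$ when $x_1,\dots,x_k$ are exactly the $k$ free occurrences of $x$ in $m$, and $\to\emptyset$ when the number of free occurrences of $x$ in $m$ differs from $k$. Surface resource reduction is the closure under resource surface contexts $s::=\square\mid\lambda x.s\mid s n\mid m s\mid s[n/x]\mid m[s/x]\mid\mathrm{der}\,s$ (not inside bags), a term reducing to $\emptyset$ whenever a subterm in surface position does. \textbf{Approximation.} $x\sqsubset x$; $\lambda x.m\sqsubset\lambda x.M$ if $m\sqsubset M$; $mn\sqsubset MN$ and $m[n/x]\sqsubset M[N/x]$ if $m\sqsubset M,n\sqsubset N$; $\mathrm{der}\,m\sqsubset\mathrm{der}\,M$ if $m\sqsubset M$; $[m_1,\dots,m_k]\sqsubset\ !M$ for any $k\ge0$ if every $m_i\sqsubset M$. *)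

theory Defs
  imports Main "HOL-Library.Multiset"
begin

text \<open>Both \<open>Lam t\<close> and the explicit
substitution \<open>ES t u\<close> (= t[u/x]) bind index 0 in \<open>t\<close>; in \<open>ES t u\<close>
the argument \<open>u\<close> is not under the binder.\<close>

datatype dterm = Var nat | Lam dterm | App dterm dterm | ES dterm dterm
  | Bang dterm | Der dterm

primrec lift :: "nat \<Rightarrow> nat \<Rightarrow> dterm \<Rightarrow> dterm" where
  "lift c n (Var i) = (if i < c then Var i else Var (i + n))"
| "lift c n (Lam t) = Lam (lift (Suc c) n t)"
| "lift c n (App t u) = App (lift c n t) (lift c n u)"
| "lift c n (ES t u) = ES (lift (Suc c) n t) (lift c n u)"
| "lift c n (Bang t) = Bang (lift c n t)"
| "lift c n (Der t) = Der (lift c n t)"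

primrec subst :: "dterm \<Rightarrow> nat \<Rightarrow> dterm \<Rightarrow> dterm" where
  "subst (Var i) k s = (if i < k then Var i else if i = k then s else Var (i - 1))"
| "subst (Lam t) k s = Lam (subst t (Suc k) (lift 0 1 s))"
| "subst (App t u) k s = App (subst t k s) (subst u k s)"
| "subst (ES t u) k s = ES (subst t (Suc k) (lift 0 1 s)) (subst u k s)"
| "subst (Bang t) k s = Bang (subst t k s)"
| "subst (Der t) k s = Der (subst t k s)"

text \<open>List contexts \<open>L = \<box>[N1/x1]...[Nj/xj]\<close> are represented by the list
\<open>[N1,...,Nj]\<close>; the hole lies under \<open>length L\<close> binders.\<close>
definition plug :: "dterm list \<Rightarrow> dterm \<Rightarrow> dterm" where
  "plug L t = foldl ES t L"

inductive root :: "dterm \<Rightarrow> dterm \<Rightarrow> bool" where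
  dB: "root (App (plug L (Lam M)) N) (plug L (ES M (lift 0 (length L) N)))"
| sbang: "root (ES M (plug L (Bang N))) (plug L (subst (lift 1 (length L) M) 0 N))"
| dbang: "root (Der (plug L (Bang N))) (plug L N)"

inductive sstep :: "dterm \<Rightarrow> dterm \<Rightarrow> bool" where
  s_root: "root M N \<Longrightarrow> sstep M N"
| s_lam: "sstep M N \<Longrightarrow> sstep (Lam M) (Lam N)"
| s_appL: "sstep M N \<Longrightarrow> sstep (App M P) (App N P)"
| s_appR: "sstep M N \<Longrightarrow> sstep (App P M) (App P N)"
| s_esL: "sstep M N \<Longrightarrow> sstep (ES M P) (ES N P)"
| s_esR: "sstep M N \<Longrightarrow> sstep (ES P M) (ES P N)"
| s_der: "sstep M N \<Longrightarrow> sstep (Der M) (Der N)"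

datatype rterm = RVar nat | RLam rterm | RApp rterm rterm | RES rterm rterm
  | RDer rterm | RBag "rterm multiset"

primrec rlift :: "nat \<Rightarrow> nat \<Rightarrow> rterm \<Rightarrow> rterm" where
  "rlift c n (RVar i) = (if i < c then RVar i else RVar (i + n))"
| "rlift c n (RLam t) = RLam (rlift (Suc c) n t)"
| "rlift c n (RApp t u) = RApp (rlift c n t) (rlift c n u)"
| "rlift c n (RES t u) = RES (rlift (Suc c) n t) (rlift c n u)"
| "rlift c n (RDer t) = RDer (rlift c n t)"
| "rlift c n (RBag B) = RBag (image_mset (rlift c n) B)"

primrec occ :: "nat \<Rightarrow> rterm \<Rightarrow> nat" where
  "occ k (RVar i) = (if i = k then 1 else 0)"
| "occ k (RLam t) = occ (Suc k) t"
| "occ k (RApp t u) = occ k t + occ k u"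
| "occ k (RES t u) = occ (Suc k) t + occ k u"
| "occ k (RDer t) = occ k t"
| "occ k (RBag B) = sum_mset (image_mset (occ k) B)"

text \<open>Linear substitution: \<open>lsub t k B r\<close> holds iff \<open>r\<close> is obtained from \<open>t\<close>
by replacing its free occurrences of index \<open>k\<close> bijectively by the elements of
the multiset \<open>B\<close> (any distribution, i.e. any permutation \<sigma>), decrementing
indices above \<open>k\<close>. It holds only when the occurrences match \<open>size B\<close>.\<close>
inductive lsub :: "rterm \<Rightarrow> nat \<Rightarrow> rterm multiset \<Rightarrow> rterm \<Rightarrow> bool"
  and lsubs :: "rterm multiset \<Rightarrow> nat \<Rightarrow> rterm multiset \<Rightarrow> rterm multiset \<Rightarrow> bool" where
  l_hit: "lsub (RVar k) k {#s#} s"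
| l_lt: "i < k \<Longrightarrow> lsub (RVar i) k {#} (RVar i)"
| l_gt: "i > k \<Longrightarrow> lsub (RVar i) k {#} (RVar (i - 1))"
| l_lam: "lsub t (Suc k) (image_mset (rlift 0 1) B) r \<Longrightarrow> lsub (RLam t) k B (RLam r)"
| l_app: "lsub t k B1 r1 \<Longrightarrow> lsub u k B2 r2 \<Longrightarrow> lsub (RApp t u) k (B1 + B2) (RApp r1 r2)"
| l_es: "lsub t (Suc k) (image_mset (rlift 0 1) B1) r1 \<Longrightarrow> lsub u k B2 r2 \<Longrightarrow>
         lsub (RES t u) k (B1 + B2) (RES r1 r2)"
| l_der: "lsub t k B r \<Longrightarrow> lsub (RDer t) k B (RDer r)"
| l_bag: "lsubs T k B R \<Longrightarrow> lsub (RBag T) k B (RBag R)"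
| ls_empty: "lsubs {#} k {#} {#}"
| ls_add: "lsubs T k B1 R \<Longrightarrow> lsub t k B2 r \<Longrightarrow> lsubs (add_mset t T) k (B1 + B2) (add_mset r R)"

definition rplug :: "rterm list \<Rightarrow> rterm \<Rightarrow> rterm" where
  "rplug l t = foldl RES t l"

inductive rroot :: "rterm \<Rightarrow> rterm \<Rightarrow> bool" where
  r_der: "rroot (RDer (rplug l (RBag {#m#}))) (rplug l m)"
| r_dB: "rroot (RApp (rplug l (RLam m)) n) (rplug l (RES m (rlift 0 (length l) n)))"
| r_sub: "occ 0 m = size B \<Longrightarrow> lsub (rlift 1 (length l) m) 0 B r \<Longrightarrow>
          rroot (RES m (rplug l (RBag B))) (rplug l r)"

inductive rroot_zero :: "rterm \<Rightarrow> bool" where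
  z_der: "size B \<noteq> 1 \<Longrightarrow> rroot_zero (RDer (rplug l (RBag B)))"
| z_sub: "occ 0 m \<noteq> size B \<Longrightarrow> rroot_zero (RES m (rplug l (RBag B)))"

inductive rstep :: "rterm \<Rightarrow> rterm \<Rightarrow> bool" where
  rs_root: "rroot m n \<Longrightarrow> rstep m n"
| rs_lam: "rstep m n \<Longrightarrow> rstep (RLam m) (RLam n)"
| rs_appL: "rstep m n \<Longrightarrow> rstep (RApp m p) (RApp n p)"
| rs_appR: "rstep m n \<Longrightarrow> rstep (RApp p m) (RApp p n)"
| rs_esL: "rstep m n \<Longrightarrow> rstep (RES m p) (RES n p)"
| rs_esR: "rstep m n \<Longrightarrow> rstep (RES p m) (RES p n)"
| rs_der: "rstep m n \<Longrightarrow> rstep (RDer m) (RDer n)"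

text \<open>Surface resource reduction to \<open>\<emptyset>\<close>.\<close>
inductive rzero :: "rterm \<Rightarrow> bool" where
  rz_root: "rroot_zero m \<Longrightarrow> rzero m"
| rz_lam: "rzero m \<Longrightarrow> rzero (RLam m)"
| rz_appL: "rzero m \<Longrightarrow> rzero (RApp m p)"
| rz_appR: "rzero m \<Longrightarrow> rzero (RApp p m)"
| rz_esL: "rzero m \<Longrightarrow> rzero (RES m p)"
| rz_esR: "rzero m \<Longrightarrow> rzero (RES p m)"
| rz_der: "rzero m \<Longrightarrow> rzero (RDer m)"

inductive approx :: "rterm \<Rightarrow> dterm \<Rightarrow> bool" where
  a_var: "approx (RVar x) (Var x)"
| a_lam: "approx m M \<Longrightarrow> approx (RLam m) (Lam M)"
| a_app: "approx m M \<Longrightarrow> approx n N \<Longrightarrow> approx (RApp m n) (App M N)"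
| a_es: "approx m M \<Longrightarrow> approx n N \<Longrightarrow> approx (RES m n) (ES M N)"
| a_der: "approx m M \<Longrightarrow> approx (RDer m) (Der M)"
| a_bag: "(\<And>m. m \<in># B \<Longrightarrow> approx m M) \<Longrightarrow> approx (RBag B) (Bang M)"

end

theory Submission
  imports Defs
begin

inductive_cases ap_var: "approx m (Var x)"
inductive_cases ap_lam: "approx m (Lam M)"
inductive_cases ap_app: "approx m (App M N)"
inductive_cases ap_es: "approx m (ES M N)"
inductive_cases ap_der: "approx m (Der M)"
inductive_cases ap_bang: "approx m (Bang M)"

lemma approx_lift: "approx m M \<Longrightarrow> approx (rlift c n m) (lift c n M)"
proof (induction m M arbitrary: c rule: approx.induct)
  case (a_bag B M)
  then show ?case by (auto intro!: approx.a_bag)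
qed (auto intro: approx.intros)

lemma occ_rlift: "k < c \<Longrightarrow> occ k (rlift c n m) = occ k m"
proof (induction m arbitrary: k c)
  case (RBag B)
  then have "image_mset (occ k \<circ> rlift c n) B = image_mset (occ k) B"
    by (intro image_mset_cong) auto
  then show ?case by (simp add: multiset.map_comp)
qed auto

lemma plug_snoc: "plug (L @ [N]) t = ES (plug L t) N"
  by (simp add: plug_def)
lemma rplug_snoc: "rplug (l @ [n]) t = RES (rplug l t) n"
  by (simp add: rplug_def)

lemma approx_plug_inv:
  "approx m (plug L t) \<Longrightarrow> \<exists>l m'. m = rplug l m' \<and> approx m' t \<and> list_all2 approx l L"
proof (induction L arbitrary: m rule: rev_induct)
  case Nil
  then show ?case by (auto simp: plug_def rplug_def)
next
  case (snoc N L)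
  from snoc.prems obtain m1 n1 where m: "m = RES m1 n1" "approx m1 (plug L t)" "approx n1 N"
    by (auto simp: plug_snoc elim: ap_es)
  from snoc.IH[OF m(2)] obtain l m' where "m1 = rplug l m'" "approx m' t" "list_all2 approx l L"
    by blast
  with m show ?case
    by (intro exI[of _ "l @ [n1]"] exI[of _ m']) (auto simp: rplug_snoc list_all2_appendI)
qed

lemma approx_plug:
  "list_all2 approx l L \<Longrightarrow> approx m t \<Longrightarrow> approx (rplug l m) (plug L t)"
proof (induction l L arbitrary: m t rule: list_all2_induct)
  case Nil
  then show ?case by (simp add: plug_def rplug_def)
next
  case (Cons x xs y ys)
  then show ?case by (simp add: plug_def rplug_def approx.a_es)
qed

lemma mset_split: "a \<le> size (B::'a multiset) \<Longrightarrow> \<exists>B1 B2. B = B1 + B2 \<and> size B1 = a"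
proof (induction B arbitrary: a)
  case empty
  then show ?case by (intro exI[of _ "{#}"]) auto
next
  case (add x B)
  show ?case
  proof (cases a)
    case 0
    then show ?thesis by (intro exI[of _ "{#}"] exI[of _ "add_mset x B"]) auto
  next
    case (Suc a')
    with add.prems have "a' \<le> size B" by simp
    from add.IH[OF this] obtain B1 B2 where "B = B1 + B2" "size B1 = a'" by blast
    with Suc show ?thesis by (intro exI[of _ "add_mset x B1"] exI[of _ B2]) auto
  qed
qed

lemma lsub_exists: "occ k t = size B \<Longrightarrow> \<exists>r. lsub t k B r"
proof (induction t arbitrary: k B)
  case (RVar i)
  show ?case
  proof (cases "i = k")
    case True
    with RVar obtain s where "B = {#s#}" by (metis One_nat_def occ.simps(1) size_1_singleton_mset)
    with True show ?thesis by (auto intro: lsub_lsubs.intros)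
  next
    case False
    with RVar have "B = {#}" by auto
    with False show ?thesis
      by (metis lsub_lsubs.l_lt lsub_lsubs.l_gt linorder_neqE_nat)
  qed
next
  case (RLam t)
  then have "occ (Suc k) t = size (image_mset (rlift 0 1) B)" by simp
  from RLam.IH[OF this] show ?case by (metis lsub_lsubs.l_lam)
next
  case (RApp t u)
  then obtain B1 B2 where B: "B = B1 + B2" "size B1 = occ k t"
    using mset_split[of "occ k t" B] by auto
  with RApp.prems have "size B2 = occ k u" by simp
  with B RApp.IH show ?case by (metis lsub_lsubs.l_app)
next
  case (RES t u)
  then obtain B1 B2 where B: "B = B1 + B2" "size B1 = occ (Suc k) t"
    using mset_split[of "occ (Suc k) t" B] by auto
  with RES.prems have "size B2 = occ k u" by simp
  moreover have "occ (Suc k) t = size (image_mset (rlift 0 1) B1)" using B by simp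
  ultimately show ?case using B RES.IH by (metis lsub_lsubs.l_es)
next
  case (RDer t)
  then show ?case by (metis occ.simps(5) lsub_lsubs.l_der)
next
  case (RBag T)
  have "\<forall>B. sum_mset (image_mset (occ k) T) = size B \<longrightarrow> (\<exists>R. lsubs T k B R)"
    using RBag.IH
  proof (induction T)
    case empty
    then show ?case by (auto intro: lsub_lsubs.intros)
  next
    case (add x T)
    show ?case
    proof (intro allI impI)
      fix B :: "rterm multiset" assume h: "sum_mset (image_mset (occ k) (add_mset x T)) = size B"
      then obtain B1 B2 where B: "B = B1 + B2" "size B1 = sum_mset (image_mset (occ k) T)"
        using mset_split[of "sum_mset (image_mset (occ k) T)" B] by auto
      with h have "size B2 = occ k x" by simp
      with add.prems obtain r where "lsub x k B2 r" by (metis union_single_eq_member)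
      moreover have "\<exists>R. lsubs T k B1 R" using add.IH add.prems B(2) by auto
      then obtain R where "lsubs T k B1 R" by blast
      ultimately show "\<exists>R. lsubs (add_mset x T) k B R" using B
        by (metis lsub_lsubs.ls_add)
    qed
  qed
  with RBag.prems show ?case by (auto intro: lsub_lsubs.intros)
qed

inductive_cases rp_var: "approx (RVar i) T"
inductive_cases rp_lam: "approx (RLam t) T"
inductive_cases rp_app: "approx (RApp t u) T"
inductive_cases rp_es: "approx (RES t u) T"
inductive_cases rp_der: "approx (RDer t) T"
inductive_cases rp_bag: "approx (RBag B) T"

lemma approx_subst_aux:
  "(lsub t k B r \<longrightarrow> (\<forall>T S. approx t T \<longrightarrow> (\<forall>b\<in>#B. approx b S) \<longrightarrow> approx r (subst T k S)))
 \<and> (lsubs Ts k B R \<longrightarrow> (\<forall>T S. (\<forall>t\<in>#Ts. approx t T) \<longrightarrow> (\<forall>b\<in>#B. approx b S)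
        \<longrightarrow> (\<forall>r\<in>#R. approx r (subst T k S))))"
proof (induct rule: lsub_lsubs.induct)
  case (l_hit k s)
  then show ?case by (auto elim!: rp_var)
next
  case (l_lt i k)
  then show ?case by (auto elim!: rp_var intro: approx.intros)
next
  case (l_gt k i)
  then show ?case by (auto elim!: rp_var intro: approx.intros)
next
  case (l_lam t k B r)
  show ?case
  proof (intro allI impI)
    fix T S assume a: "approx (RLam t) T" "\<forall>b\<in>#B. approx b S"
    from a(1) obtain T' where T: "T = Lam T'" "approx t T'" by (auto elim: rp_lam)
    have "\<forall>b\<in>#image_mset (rlift 0 1) B. approx b (lift 0 1 S)" using a(2) approx_lift by auto
    with l_lam T show "approx (RLam r) (subst T k S)" by (auto intro: approx.intros)
  qed
next
  case (l_app t k B1 r1 u B2 r2)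
  then show ?case by (auto elim!: rp_app intro!: approx.intros)
next
  case (l_es t k B1 r1 u B2 r2)
  show ?case
  proof (intro allI impI)
    fix T S assume a: "approx (RES t u) T" "\<forall>b\<in>#B1 + B2. approx b S"
    from a(1) obtain T1 T2 where T: "T = ES T1 T2" "approx t T1" "approx u T2" by (auto elim: rp_es)
    have "\<forall>b\<in>#image_mset (rlift 0 1) B1. approx b (lift 0 1 S)" using a(2) approx_lift by auto
    with l_es T a show "approx (RES r1 r2) (subst T k S)" by (auto intro: approx.intros)
  qed
next
  case (l_der t k B r)
  then show ?case by (auto elim!: rp_der intro!: approx.intros)
next
  case (l_bag T k B R)
  then show ?case by (auto elim!: rp_bag intro!: approx.intros)
next
  case (ls_empty k)
  then show ?case by auto
next
  case (ls_add T k B1 R t B2 r)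
  then show ?case by auto
qed

lemma approx_subst:
  "lsub t k B r \<Longrightarrow> approx t T \<Longrightarrow> (\<And>b. b \<in># B \<Longrightarrow> approx b S) \<Longrightarrow> approx r (subst T k S)"
  using approx_subst_aux by blast


lemma root_sim:
  assumes "root M N" and "approx m M"
  shows "rzero m \<or> (\<exists>n. approx n N \<and> rstep m n)"
  using assms(1)
proof cases
  case (dB L M0 N0)
  from assms(2) dB obtain m1 n1 where m: "m = RApp m1 n1" "approx m1 (plug L (Lam M0))" "approx n1 N0"
    by (auto elim: ap_app)
  from approx_plug_inv[OF m(2)] obtain l m' where l: "m1 = rplug l m'" "approx m' (Lam M0)" "list_all2 approx l L"
    by blast
  from l(2) obtain m0 where m0: "m' = RLam m0" "approx m0 M0" by (auto elim: ap_lam)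
  have len: "length l = length L" using l(3) by (rule list_all2_lengthD)
  have "approx (rplug l (RES m0 (rlift 0 (length l) n1))) N"
    using dB l(3) m0(2) m(3) len by (auto intro!: approx_plug approx.intros approx_lift)
  moreover have "rstep m (rplug l (RES m0 (rlift 0 (length l) n1)))"
    using m l m0 by (auto intro!: rstep.rs_root rroot.r_dB)
  ultimately show ?thesis by blast
next
  case (sbang M0 L N0)
  from assms(2) sbang obtain m0 m1 where m: "m = RES m0 m1" "approx m1 (plug L (Bang N0))" "approx m0 M0"
    by (auto elim: ap_es)
  from approx_plug_inv[OF m(2)] obtain l m' where l: "m1 = rplug l m'" "approx m' (Bang N0)" "list_all2 approx l L"
    by blast
  from l(2) obtain B where B: "m' = RBag B" "\<And>b. b \<in># B \<Longrightarrow> approx b N0" by (auto elim: ap_bang)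
  have len: "length l = length L" using l(3) by (rule list_all2_lengthD)
  show ?thesis
  proof (cases "occ 0 m0 = size B")
    case True
    then have "occ 0 (rlift 1 (length l) m0) = size B" by (simp add: occ_rlift)
    from lsub_exists[OF this] obtain r where r: "lsub (rlift 1 (length l) m0) 0 B r" by blast
    have "approx r (subst (lift 1 (length L) M0) 0 N0)"
      using approx_subst[OF r approx_lift[OF m(3)] B(2)] len by simp
    then have "approx (rplug l r) N" using sbang l(3) by (auto intro: approx_plug)
    moreover have "rstep m (rplug l r)" using m l B True r by (auto intro!: rstep.rs_root rroot.r_sub)
    ultimately show ?thesis by blast
  next
    case False
    then have "rzero m" using m l B by (auto intro!: rzero.rz_root rroot_zero.z_sub)
    then show ?thesis by blast
  qed
next
  case (dbang L N0)
  from assms(2) dbang obtain m1 where m: "m = RDer m1" "approx m1 (plug L (Bang N0))"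
    by (auto elim: ap_der)
  from approx_plug_inv[OF m(2)] obtain l m' where l: "m1 = rplug l m'" "approx m' (Bang N0)" "list_all2 approx l L"
    by blast
  from l(2) obtain B where B: "m' = RBag B" "\<And>b. b \<in># B \<Longrightarrow> approx b N0" by (auto elim: ap_bang)
  show ?thesis
  proof (cases "size B = 1")
    case True
    then obtain b where b: "B = {#b#}" using size_1_singleton_mset by blast
    have "approx (rplug l b) N" using dbang l(3) B(2) b by (auto intro: approx_plug)
    moreover have "rstep m (rplug l b)" using m l B b by (auto intro!: rstep.rs_root rroot.r_der)
    ultimately show ?thesis by blast
  next
    case False
    then have "rzero m" using m l B by (auto intro!: rzero.rz_root rroot_zero.z_der)
    then show ?thesis by blast
  qed
qed

theorem mainTheorem3:
  assumes "sstep M N" and "approx m M"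
  shows "rzero m \<or> (\<exists>n. approx n N \<and> rstep m n)"
  using assms
proof (induction M N arbitrary: m rule: sstep.induct)
  case (s_root M N)
  then show ?case by (rule root_sim)
next
  case (s_lam M N)
  then show ?case by (fastforce elim!: ap_lam intro: approx.intros rstep.intros rzero.intros)
next
  case (s_appL M N P)
  then show ?case by (fastforce elim!: ap_app intro: approx.intros rstep.intros rzero.intros)
next
  case (s_appR M N P)
  then show ?case by (fastforce elim!: ap_app intro: approx.intros rstep.intros rzero.intros)
next
  case (s_esL M N P)
  then show ?case by (fastforce elim!: ap_es intro: approx.intros rstep.intros rzero.intros)
next
  case (s_esR M N P)
  then show ?case by (fastforce elim!: ap_es intro: approx.intros rstep.intros rzero.intros)
next
  case (s_der M N)
  then show ?case by (fastforce elim!: ap_der intro: approx.intros rstep.intros rzero.intros)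
qed

end
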